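(* (5) $\lambda(L_1\sqcup C_2)$ is isomorphic to $L_1\sqcup L_1\sqcup C_2$. (6) $\lambda(L_2\times C_2)$ is isomorphic to $\big(L_1\sqcup(L_2\times L_2)\sqcup L_1\big)\times C_2$.
   Context: $\lambda(X)$ is the set of maximal linked upfamilies on $X$ (an upfamily is a family of nonempty subsets closed under supersets; linked means any two members intersect; maximal linked means not properly contained in another linked upfamily), with operation $\mathcal A*\mathcal B=\big\langle \bigcup_{a\in A} a*B_a : A\in\mathcal A,\ \{B_a\}_{a\in A}\subset\mathcal B\big\rangle$, where $\langle\mathcal C\rangle=\{A\subset X:\exists C\in\mathcal C,\ C\subset A\}$. $C_n=\{z\in\mathbb C:z^n=1\}$; $L_n=\{0,\dots,n-1\}$ with operation $\min$. For semigroups $(X,* )$, $(Y,\star)$, the disjoint ordered union $X\sqcup Y$ is the disjoint union with operation $x\circ y=x*y$ for $x,y\in X$; $x\circ y=x$ if $x\in X,y\in Y$; $x\circ y=y$ if $x\in Y,y\in X$; $x\circ y=x\star y$ for $x,y\in Y$ (this operation is associative: $(X\sqcup Y)\sqcup Z=X\sqcup(Y\sqcup Z)$). *)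

theory Defs
  imports Complex_Main
begin

definition upfamily :: "'a set \<Rightarrow> 'a set set \<Rightarrow> bool" where
  "upfamily X F \<longleftrightarrow> F \<subseteq> Pow X \<and> {} \<notin> F \<and>
     (\<forall>A\<in>F. \<forall>B. A \<subseteq> B \<and> B \<subseteq> X \<longrightarrow> B \<in> F)"

definition linked :: "'a set set \<Rightarrow> bool" where
  "linked F \<longleftrightarrow> (\<forall>A\<in>F. \<forall>B\<in>F. A \<inter> B \<noteq> {})"

definition maximal_linked :: "'a set \<Rightarrow> 'a set set \<Rightarrow> bool" where
  "maximal_linked X F \<longleftrightarrow> upfamily X F \<and> linked F \<and>
     (\<forall>G. upfamily X G \<and> linked G \<and> F \<subseteq> G \<longrightarrow> G = F)"

definition lam :: "'a set \<Rightarrow> 'a set set set" where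
  "lam X = {F. maximal_linked X F}"

definition lam_op :: "'a set \<Rightarrow> ('a \<Rightarrow> 'a \<Rightarrow> 'a) \<Rightarrow> 'a set set \<Rightarrow> 'a set set \<Rightarrow> 'a set set" where
  "lam_op X m \<A> \<B> = {S. S \<subseteq> X \<and> (\<exists>A\<in>\<A>. \<exists>Bf. (\<forall>a\<in>A. Bf a \<in> \<B>) \<and>
       (\<Union>a\<in>A. (\<lambda>b. m a b) ` Bf a) \<subseteq> S)}"

definition sg_iso :: "'a set \<Rightarrow> ('a \<Rightarrow> 'a \<Rightarrow> 'a) \<Rightarrow> 'b set \<Rightarrow> ('b \<Rightarrow> 'b \<Rightarrow> 'b) \<Rightarrow> bool" where
  "sg_iso X m Y n \<longleftrightarrow> (\<exists>f. bij_betw f X Y \<and> (\<forall>x\<in>X. \<forall>y\<in>X. f (m x y) = n (f x) (f y)))"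

definition dou :: "'a set \<Rightarrow> 'b set \<Rightarrow> ('a + 'b) set" where
  "dou X Y = X <+> Y"

fun dou_op :: "('a \<Rightarrow> 'a \<Rightarrow> 'a) \<Rightarrow> ('b \<Rightarrow> 'b \<Rightarrow> 'b) \<Rightarrow> 'a + 'b \<Rightarrow> 'a + 'b \<Rightarrow> 'a + 'b" where
  "dou_op m n (Inl x) (Inl y) = Inl (m x y)"
| "dou_op m n (Inl x) (Inr y) = Inl x"
| "dou_op m n (Inr x) (Inl y) = Inl y"
| "dou_op m n (Inr x) (Inr y) = Inr (n x y)"

definition prod_op :: "('a \<Rightarrow> 'a \<Rightarrow> 'a) \<Rightarrow> ('b \<Rightarrow> 'b \<Rightarrow> 'b) \<Rightarrow> 'a \<times> 'b \<Rightarrow> 'a \<times> 'b \<Rightarrow> 'a \<times> 'b" where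
  "prod_op m n p q = (m (fst p) (fst q), n (snd p) (snd q))"

text \<open>L_n = {0,...,n-1} with min; C_n = n-th roots of unity with multiplication.\<close>
definition Lset :: "nat \<Rightarrow> nat set" where
  "Lset n = {0..<n}"

definition Cset :: "nat \<Rightarrow> complex set" where
  "Cset n = {z. z ^ n = 1}"

end

theory Submission
  imports Defs
begin


definition up :: "'a set \<Rightarrow> 'a set set \<Rightarrow> 'a set set" where
  "up X Gs = {S. S \<subseteq> X \<and> (\<exists>G\<in>Gs. G \<subseteq> S)}"
definition cmpl :: "'a set \<Rightarrow> 'a set set \<Rightarrow> bool" where
  "cmpl X Gs \<longleftrightarrow> (\<forall>S\<in>Pow X. (\<exists>G\<in>Gs. G \<subseteq> S) \<or> (\<exists>G\<in>Gs. G \<inter> S = {}))"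
definition pwi :: "'a set set \<Rightarrow> bool" where
  "pwi Gs \<longleftrightarrow> (\<forall>G\<in>Gs. \<forall>G'\<in>Gs. G \<inter> G' \<noteq> {})"

lemma up_mem: "S \<in> up X Gs \<longleftrightarrow> S \<subseteq> X \<and> (\<exists>G\<in>Gs. G \<subseteq> S)"
  by (simp add: up_def)

lemma ml_up:
  assumes "Gs \<subseteq> Pow X" "pwi Gs" "cmpl X Gs"
  shows "maximal_linked X (up X Gs)"
proof -
  have a1: "up X Gs \<subseteq> Pow X" by (auto simp: up_def)
  have a2: "{} \<notin> up X Gs"
  proof
    assume "{} \<in> up X Gs"
    then obtain G where "G \<in> Gs" "G \<subseteq> {}" by (auto simp: up_def)
    with assms(2) show False unfolding pwi_def by blast
  qed
  have a3: "\<forall>A\<in>up X Gs. \<forall>B. A \<subseteq> B \<and> B \<subseteq> X \<longrightarrow> B \<in> up X Gs"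
  proof (intro ballI allI impI)
    fix A B assume "A \<in> up X Gs" "A \<subseteq> B \<and> B \<subseteq> X"
    then obtain G where "G \<in> Gs" "G \<subseteq> A" "B \<subseteq> X" "A \<subseteq> B" unfolding up_mem by blast
    thus "B \<in> up X Gs" unfolding up_mem by blast
  qed
  have uf: "upfamily X (up X Gs)" unfolding upfamily_def using a1 a2 a3 by blast
  have li: "linked (up X Gs)" unfolding linked_def
  proof (intro ballI)
    fix A B assume "A \<in> up X Gs" "B \<in> up X Gs"
    then obtain G G' where "G \<in> Gs" "G' \<in> Gs" "G \<subseteq> A" "G' \<subseteq> B" unfolding up_mem by blast
    moreover have "G \<inter> G' \<noteq> {}" using assms(2) calculation unfolding pwi_def by blast
    ultimately show "A \<inter> B \<noteq> {}" by blast
  qed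
  show ?thesis unfolding maximal_linked_def
  proof (intro conjI uf li allI impI)
    fix G assume G: "upfamily X G \<and> linked G \<and> up X Gs \<subseteq> G"
    show "G = up X Gs"
    proof (rule equalityI)
      show "up X Gs \<subseteq> G" using G by blast
      show "G \<subseteq> up X Gs"
      proof
        fix S assume S: "S \<in> G"
        hence SX: "S \<subseteq> X" using G unfolding upfamily_def by blast
        show "S \<in> up X Gs"
        proof (cases "\<exists>G\<in>Gs. G \<subseteq> S")
          case True thus ?thesis using SX unfolding up_mem by blast
        next
          case False
          then obtain H where H: "H \<in> Gs" "H \<inter> S = {}"
            using assms(3) SX unfolding cmpl_def by blast
          have "H \<in> up X Gs" using H assms(1) unfolding up_mem by blast
          hence "H \<in> G" using G by blast
          hence "H \<inter> S \<noteq> {}" using G S unfolding linked_def by blast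
          thus ?thesis using H by blast
        qed
      qed
    qed
  qed
qed


definition chk :: "('a \<Rightarrow> 'a \<Rightarrow> 'a) \<Rightarrow> 'a set set \<Rightarrow> 'a set set \<Rightarrow> 'a set set \<Rightarrow> bool" where
  "chk m Gs1 Gs2 Gs \<longleftrightarrow> (\<forall>G\<in>Gs. \<exists>A\<in>Gs1. \<forall>a\<in>A. \<exists>B\<in>Gs2. (\<lambda>b. m a b) ` B \<subseteq> G)"

lemma ml_facts:
  assumes "maximal_linked X F"
  shows "\<And>S. S \<in> F \<Longrightarrow> S \<subseteq> X" "\<And>S T. S \<in> F \<Longrightarrow> S \<subseteq> T \<Longrightarrow> T \<subseteq> X \<Longrightarrow> T \<in> F"
    "\<And>S T. S \<in> F \<Longrightarrow> T \<in> F \<Longrightarrow> S \<inter> T \<noteq> {}" "{} \<notin> F"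
  using assms unfolding maximal_linked_def upfamily_def linked_def by blast+

lemma ml_eq:
  assumes F: "maximal_linked X F" and "Gs \<subseteq> F" "cmpl X Gs"
  shows "F = up X Gs"
proof (rule equalityI)
  show "up X Gs \<subseteq> F"
  proof
    fix S assume "S \<in> up X Gs"
    then obtain G where "G \<in> Gs" "G \<subseteq> S" "S \<subseteq> X" unfolding up_mem by blast
    thus "S \<in> F" using ml_facts(2)[OF F] assms(2) by blast
  qed
  show "F \<subseteq> up X Gs"
  proof
    fix S assume S: "S \<in> F"
    hence SX: "S \<subseteq> X" using ml_facts(1)[OF F] by blast
    show "S \<in> up X Gs"
    proof (cases "\<exists>G\<in>Gs. G \<subseteq> S")
      case True thus ?thesis using SX unfolding up_mem by blast
    next
      case False
      then obtain H where H: "H \<in> Gs" "H \<inter> S = {}"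
        using assms(3) SX unfolding cmpl_def by blast
      hence "H \<in> F" using assms(2) by blast
      hence "H \<inter> S \<noteq> {}" using ml_facts(3)[OF F] S by blast
      thus ?thesis using H by blast
    qed
  qed
qed

lemma ml_compl:
  assumes F: "maximal_linked X F" and SX: "S \<subseteq> X" and Sne: "S \<noteq> {}" and SF: "S \<notin> F"
  shows "X - S \<in> F"
proof (rule ccontr)
  assume nc: "X - S \<notin> F"
  have nd: "\<And>B. B \<in> F \<Longrightarrow> B \<inter> S \<noteq> {}"
  proof
    fix B assume B: "B \<in> F" "B \<inter> S = {}"
    have "B \<subseteq> X" using B ml_facts(1)[OF F] by blast
    hence "B \<subseteq> X - S" using B by blast
    hence "X - S \<in> F" using B ml_facts(2)[OF F] by blast
    thus False using nc by blast
  qed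
  define G where "G = F \<union> {T. T \<subseteq> X \<and> S \<subseteq> T}"
  have g1: "G \<subseteq> Pow X" unfolding G_def using ml_facts(1)[OF F] by blast
  have g2: "{} \<notin> G" unfolding G_def using ml_facts(4)[OF F] Sne by blast
  have g3: "\<forall>A\<in>G. \<forall>B. A \<subseteq> B \<and> B \<subseteq> X \<longrightarrow> B \<in> G"
  proof (intro ballI allI impI)
    fix A B assume "A \<in> G" "A \<subseteq> B \<and> B \<subseteq> X"
    thus "B \<in> G" unfolding G_def using ml_facts(2)[OF F] by blast
  qed
  have uf: "upfamily X G" unfolding upfamily_def by (intro conjI g1 g2 g3)
  have li: "linked G" unfolding linked_def
  proof (intro ballI)
    fix A B assume A: "A \<in> G" and B: "B \<in> G"
    show "A \<inter> B \<noteq> {}"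
    proof (cases "A \<in> F")
      case True
      show ?thesis
      proof (cases "B \<in> F")
        case True thus ?thesis using \<open>A \<in> F\<close> ml_facts(3)[OF F] by blast
      next
        case False hence "S \<subseteq> B" using B unfolding G_def by blast
        thus ?thesis using nd[OF \<open>A \<in> F\<close>] by blast
      qed
    next
      case False hence SA: "S \<subseteq> A" using A unfolding G_def by blast
      show ?thesis
      proof (cases "B \<in> F")
        case True thus ?thesis using nd[OF True] SA by blast
      next
        case False hence "S \<subseteq> B" using B unfolding G_def by blast
        thus ?thesis using SA Sne by blast
      qed
    qed
  qed
  have "F \<subseteq> G" unfolding G_def by blast
  hence "G = F" using F uf li unfolding maximal_linked_def by blast
  moreover have "S \<in> G" unfolding G_def using SX by blast
  ultimately show False using SF by blast
qed

lemma lam_op_upfamily: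
  assumes A: "upfamily X A" and B: "upfamily X B"
  shows "upfamily X (lam_op X m A B)"
proof -
  have ne: "{} \<notin> lam_op X m A B"
  proof
    assume "{} \<in> lam_op X m A B"
    then obtain A0 Bf where h: "A0 \<in> A" "\<forall>a\<in>A0. Bf a \<in> B" "(\<Union>a\<in>A0. (\<lambda>b. m a b) ` Bf a) \<subseteq> {}"
      unfolding lam_op_def by blast
    have eA: "{} \<notin> A" and eB: "{} \<notin> B" using A B by (simp_all add: upfamily_def)
    have "A0 \<noteq> {}" using eA h(1) by metis
    then obtain a where a: "a \<in> A0" by blast
    hence "Bf a \<in> B" using h(2) by blast
    hence "Bf a \<noteq> {}" using eB by metis
    then obtain b where "b \<in> Bf a" by blast
    hence "m a b \<in> (\<Union>a\<in>A0. (\<lambda>b. m a b) ` Bf a)" using a by blast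
    thus False using h(3) by blast
  qed
  have p: "lam_op X m A B \<subseteq> Pow X" unfolding lam_op_def by blast
  have u: "\<forall>S\<in>lam_op X m A B. \<forall>T. S \<subseteq> T \<and> T \<subseteq> X \<longrightarrow> T \<in> lam_op X m A B"
  proof (intro ballI allI impI)
    fix S T assume "S \<in> lam_op X m A B" "S \<subseteq> T \<and> T \<subseteq> X"
    thus "T \<in> lam_op X m A B" unfolding lam_op_def by (simp, meson order_trans)
  qed
  show ?thesis unfolding upfamily_def by (intro conjI p ne u)
qed

lemma lam_op_linked:
  assumes "linked A" "linked B"
  shows "linked (lam_op X m A B)"
  unfolding linked_def
proof (intro ballI)
  fix S T assume S: "S \<in> lam_op X m A B" and T: "T \<in> lam_op X m A B"
  from S obtain A1 Bf where h1: "A1 \<in> A" "\<forall>a\<in>A1. Bf a \<in> B" "(\<Union>a\<in>A1. (\<lambda>b. m a b) ` Bf a) \<subseteq> S"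
    unfolding lam_op_def by auto
  from T obtain A2 Bg where h2: "A2 \<in> A" "\<forall>a\<in>A2. Bg a \<in> B" "(\<Union>a\<in>A2. (\<lambda>b. m a b) ` Bg a) \<subseteq> T"
    unfolding lam_op_def by auto
  have "A1 \<inter> A2 \<noteq> {}" using assms(1) h1(1) h2(1) unfolding linked_def by simp
  then obtain a where a: "a \<in> A1" "a \<in> A2" by auto
  have "Bf a \<in> B" "Bg a \<in> B" using h1(2) h2(2) a by simp_all
  hence "Bf a \<inter> Bg a \<noteq> {}" using assms(2) unfolding linked_def by simp
  then obtain b where b: "b \<in> Bf a" "b \<in> Bg a" by auto
  have "m a b \<in> S" using h1(3) a b by auto
  moreover have "m a b \<in> T" using h2(3) a b by auto
  ultimately show "S \<inter> T \<noteq> {}" by auto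
qed

lemma lam_op_eq:
  assumes A: "maximal_linked X (up X Gs1)" and B: "maximal_linked X (up X Gs2)"
    and C: "maximal_linked X (up X Gs)"
    and s1: "Gs1 \<subseteq> Pow X" and s2: "Gs2 \<subseteq> Pow X"
    and ch: "chk m Gs1 Gs2 Gs"
  shows "lam_op X m (up X Gs1) (up X Gs2) = up X Gs"
proof -
  have sub: "up X Gs \<subseteq> lam_op X m (up X Gs1) (up X Gs2)"
  proof
    fix S assume "S \<in> up X Gs"
    then obtain G where G: "G \<in> Gs" "G \<subseteq> S" "S \<subseteq> X" unfolding up_mem by blast
    then obtain A0 where A0: "A0 \<in> Gs1" "\<forall>a\<in>A0. \<exists>B\<in>Gs2. (\<lambda>b. m a b) ` B \<subseteq> G"
      using ch unfolding chk_def by blast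
    define Bf where "Bf = (\<lambda>a. SOME B. B \<in> Gs2 \<and> (\<lambda>b. m a b) ` B \<subseteq> G)"
    have Bf: "\<forall>a\<in>A0. Bf a \<in> Gs2 \<and> (\<lambda>b. m a b) ` Bf a \<subseteq> G"
    proof
      fix a assume "a \<in> A0"
      hence "\<exists>B. B \<in> Gs2 \<and> (\<lambda>b. m a b) ` B \<subseteq> G" using A0(2) by blast
      thus "Bf a \<in> Gs2 \<and> (\<lambda>b. m a b) ` Bf a \<subseteq> G" unfolding Bf_def by (rule someI_ex)
    qed
    have "A0 \<in> up X Gs1" using A0(1) s1 unfolding up_mem by blast
    moreover have "\<forall>a\<in>A0. Bf a \<in> up X Gs2" using Bf s2 unfolding up_mem by blast
    moreover have "(\<Union>a\<in>A0. (\<lambda>b. m a b) ` Bf a) \<subseteq> S" using Bf G(2) by blast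
    ultimately show "S \<in> lam_op X m (up X Gs1) (up X Gs2)"
      using G(3) unfolding lam_op_def by blast
  qed
  have "upfamily X (lam_op X m (up X Gs1) (up X Gs2))"
    by (rule lam_op_upfamily) (use A B in \<open>simp_all add: maximal_linked_def\<close>)
  moreover have "linked (lam_op X m (up X Gs1) (up X Gs2))"
    by (rule lam_op_linked) (use A B in \<open>simp_all add: maximal_linked_def\<close>)
  ultimately show ?thesis using C sub unfolding maximal_linked_def by blast
qed

lemma iso_from_g:
  assumes bij: "bij_betw g Y L" and h: "\<forall>y1\<in>Y. \<forall>y2\<in>Y. n y1 y2 \<in> Y \<and> g (n y1 y2) = mop (g y1) (g y2)"
  shows "sg_iso L mop Y n"
  unfolding sg_iso_def
proof (intro exI conjI ballI)
  show "bij_betw (inv_into Y g) L Y" using bij by (rule bij_betw_inv_into)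
  fix x y assume "x \<in> L" "y \<in> L"
  hence "x \<in> g ` Y" "y \<in> g ` Y" using bij unfolding bij_betw_def by simp_all
  then obtain y1 y2 where y: "y1 \<in> Y" "y2 \<in> Y" "x = g y1" "y = g y2" by blast
  have inj: "inj_on g Y" using bij unfolding bij_betw_def by simp
  have ny: "n y1 y2 \<in> Y" "mop x y = g (n y1 y2)" using h y by simp_all
  have "inv_into Y g (mop x y) = n y1 y2" using inj ny by simp
  moreover have "inv_into Y g x = y1" "inv_into Y g y = y2" using inj y by simp_all
  ultimately show "inv_into Y g (mop x y) = n (inv_into Y g x) (inv_into Y g y)" by simp
qed


lemma ml_compl':
  assumes "maximal_linked X F" "S \<subseteq> X" "S \<noteq> {}" "S \<notin> F" "X - S = T"
  shows "T \<in> F"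
  using ml_compl[OF assms(1-4)] assms(5) by simp

lemma gens_in_up: "G \<in> Gs \<Longrightarrow> G \<subseteq> X \<Longrightarrow> G \<in> up X Gs"
  unfolding up_mem by blast

lemma assemble:
  assumes sub: "\<forall>y\<in>Y. gens y \<subseteq> Pow X" and pw: "\<forall>y\<in>Y. pwi (gens y)"
    and cm: "\<forall>y\<in>Y. cmpl X (gens y)"
    and ch: "\<forall>y1\<in>Y. \<forall>y2\<in>Y. n y1 y2 \<in> Y \<and> chk m (gens y1) (gens y2) (gens (n y1 y2))"
    and dist: "\<forall>y1\<in>Y. \<forall>y2\<in>Y. gens y1 \<subseteq> up X (gens y2) \<and> gens y2 \<subseteq> up X (gens y1) \<longrightarrow> y1 = y2"
    and cls: "\<And>F. maximal_linked X F \<Longrightarrow> \<exists>y\<in>Y. F = up X (gens y)"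
  shows "sg_iso (lam X) (lam_op X m) Y n"
proof (rule iso_from_g)
  define g where "g = (\<lambda>y. up X (gens y))"
  have ml: "\<And>y. y \<in> Y \<Longrightarrow> maximal_linked X (g y)"
    unfolding g_def by (rule ml_up) (use sub pw cm in auto)
  have self: "\<And>y. y \<in> Y \<Longrightarrow> gens y \<subseteq> g y"
    unfolding g_def using sub gens_in_up by (metis PowD subset_iff)
  have inj: "inj_on g Y"
  proof (rule inj_onI)
    fix y1 y2 assume y: "y1 \<in> Y" "y2 \<in> Y" "g y1 = g y2"
    hence "gens y1 \<subseteq> up X (gens y2)" "gens y2 \<subseteq> up X (gens y1)"
      using self[OF y(1)] self[OF y(2)] unfolding g_def by auto
    thus "y1 = y2" using dist y(1,2) by simp
  qed
  have im: "g ` Y = lam X"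
  proof (rule equalityI)
    show "g ` Y \<subseteq> lam X" using ml unfolding lam_def by auto
    show "lam X \<subseteq> g ` Y"
    proof
      fix F assume "F \<in> lam X"
      hence "maximal_linked X F" unfolding lam_def by simp
      then obtain y where "y \<in> Y" "F = g y" using cls unfolding g_def by auto
      thus "F \<in> g ` Y" by simp
    qed
  qed
  show "bij_betw g Y (lam X)" unfolding bij_betw_def using inj im by simp
  show "\<forall>y1\<in>Y. \<forall>y2\<in>Y. n y1 y2 \<in> Y \<and> g (n y1 y2) = lam_op X m (g y1) (g y2)"
  proof (intro ballI conjI)
    fix y1 y2 assume y: "y1 \<in> Y" "y2 \<in> Y"
    show ny: "n y1 y2 \<in> Y" using ch y by simp
    have "lam_op X m (g y1) (g y2) = g (n y1 y2)"
      unfolding g_def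
      by (rule lam_op_eq[OF ml[OF y(1), unfolded g_def] ml[OF y(2), unfolded g_def]
            ml[OF ny, unfolded g_def]]) (use sub ch y in auto)
    thus "g (n y1 y2) = lam_op X m (g y1) (g y2)" by simp
  qed
qed



lemma Cset2: "Cset 2 = {1, -1}"
  unfolding Cset_def by (auto simp: power2_eq_1_iff)
lemma Lset1: "Lset 1 = {0}" unfolding Lset_def by auto
lemma Lset2: "Lset 2 = {0, 1}" unfolding Lset_def by auto

definition X5 :: "(nat + complex) set" where "X5 = {Inl 0, Inr 1, Inr (-1)}"
definition Y5 :: "(nat + (nat + complex)) set" where "Y5 = {Inl 0, Inr (Inl 0), Inr (Inr 1), Inr (Inr (-1))}"

lemma X5_eq: "dou (Lset 1) (Cset 2) = X5" unfolding X5_def dou_def Lset1 Cset2 by auto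
lemma Y5_eq: "dou (Lset 1) (dou (Lset 1) (Cset 2)) = Y5" unfolding Y5_def dou_def Lset1 Cset2 by auto

lemma Y5_eq2: "dou (Lset 1) X5 = Y5" unfolding Y5_def X5_def dou_def Lset1 by auto

fun gens5 :: "nat + (nat + complex) \<Rightarrow> (nat + complex) set set" where
  "gens5 (Inl _) = {{Inl 0}}"
| "gens5 (Inr (Inl _)) = {{Inl 0, Inr 1}, {Inl 0, Inr (-1)}, {Inr 1, Inr (-1)}}"
| "gens5 (Inr (Inr c)) = {{Inr c}}"

lemma cmpl5: "\<forall>y\<in>Y5. cmpl X5 (gens5 y)"
  unfolding Y5_def X5_def cmpl_def by (simp add: Pow_insert ex_disj_distrib)

lemma pwi5: "\<forall>y\<in>Y5. pwi (gens5 y)"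
  unfolding Y5_def pwi_def by simp

lemma sub5: "\<forall>y\<in>Y5. gens5 y \<subseteq> Pow X5"
  unfolding Y5_def X5_def by simp

lemma chk5: "\<forall>y1\<in>Y5. \<forall>y2\<in>Y5. dou_op min (dou_op min (*)) y1 y2 \<in> Y5 \<and>
   chk (dou_op min (*)) (gens5 y1) (gens5 y2) (gens5 (dou_op min (dou_op min (*)) y1 y2))"
  unfolding Y5_def chk_def by simp


lemma dist5: "\<forall>y1\<in>Y5. \<forall>y2\<in>Y5. gens5 y1 \<subseteq> up X5 (gens5 y2) \<and> gens5 y2 \<subseteq> up X5 (gens5 y1) \<longrightarrow> y1 = y2"
  unfolding Y5_def X5_def by (simp add: up_mem)

lemma cls5:
  assumes F: "maximal_linked X5 F"
  shows "\<exists>y\<in>Y5. F = up X5 (gens5 y)"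
proof -
  have cm: "\<And>y. y \<in> Y5 \<Longrightarrow> cmpl X5 (gens5 y)" using cmpl5 by blast
  show ?thesis
  proof (cases "{Inl 0} \<in> F")
    case True
    have "F = up X5 (gens5 (Inl 0))" by (rule ml_eq[OF F _ cm]) (use True in \<open>simp_all add: Y5_def\<close>)
    thus ?thesis by (auto simp: Y5_def)
  next
    case n1: False
    show ?thesis
    proof (cases "{Inr 1} \<in> F")
      case True
      have "F = up X5 (gens5 (Inr (Inr 1)))" by (rule ml_eq[OF F _ cm]) (use True in \<open>simp_all add: Y5_def\<close>)
      thus ?thesis by (auto simp: Y5_def)
    next
      case n2: False
      show ?thesis
      proof (cases "{Inr (-1)} \<in> F")
        case True
        have "F = up X5 (gens5 (Inr (Inr (-1))))" by (rule ml_eq[OF F _ cm]) (use True in \<open>simp_all add: Y5_def\<close>)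
        thus ?thesis by (auto simp: Y5_def)
      next
        case n3: False
        have a: "{Inr 1, Inr (-1)} \<in> F" by (rule ml_compl'[OF F _ _ n1]) (auto simp: X5_def)
        have b: "{Inl 0, Inr (-1)} \<in> F" by (rule ml_compl'[OF F _ _ n2]) (auto simp: X5_def)
        have c: "{Inl 0, Inr 1} \<in> F" by (rule ml_compl'[OF F _ _ n3]) (auto simp: X5_def)
        have "F = up X5 (gens5 (Inr (Inl 0)))" by (rule ml_eq[OF F _ cm]) (use a b c in \<open>simp_all add: Y5_def\<close>)
        thus ?thesis by (auto simp: Y5_def)
      qed
    qed
  qed
qed

lemma part5: "sg_iso (lam (dou (Lset 1) (Cset 2))) (lam_op (dou (Lset 1) (Cset 2)) (dou_op min (*)))
                (dou (Lset 1) (dou (Lset 1) (Cset 2))) (dou_op min (dou_op min (*)))"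
  unfolding X5_eq Y5_eq2
  by (rule assemble[OF sub5 pwi5 cmpl5 chk5 dist5 cls5])



definition X6 :: "(nat \<times> complex) set" where "X6 = {(0, 1), (0, -1), (1, 1), (1, -1)}"
definition Y6 :: "(((nat + nat \<times> nat) + nat) \<times> complex) set" where
  "Y6 = {(Inl (Inl 0), 1), (Inl (Inl 0), -1), (Inr 0, 1), (Inr 0, -1),
         (Inl (Inr (0,0)), 1), (Inl (Inr (0,1)), 1), (Inl (Inr (1,0)), 1), (Inl (Inr (1,1)), 1),
         (Inl (Inr (0,0)), -1), (Inl (Inr (0,1)), -1), (Inl (Inr (1,0)), -1), (Inl (Inr (1,1)), -1)}"

lemma X6_eq: "Lset 2 \<times> Cset 2 = X6" unfolding X6_def Lset2 Cset2 by auto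
lemma Y6_eq: "dou (dou (Lset 1) (Lset 2 \<times> Lset 2)) (Lset 1) \<times> Cset 2 = Y6"
  unfolding Y6_def dou_def Lset1 Lset2 Cset2 by auto

fun gens6 :: "((nat + nat \<times> nat) + nat) \<times> complex \<Rightarrow> (nat \<times> complex) set set" where
  "gens6 (Inl (Inl _), c) = (if c = 1 then {{(0, 1)}} else {{(0, -1)}})"
| "gens6 (Inr _, c) = (if c = 1 then {{(1, 1)}} else {{(1, -1)}})"
| "gens6 (Inl (Inr (i, j)), c) = (if c = 1 then (if i = 0 then (if j = 0 then {{(0, 1), (0, -1)}, {(0, 1), (1, 1)}, {(0, 1), (1, -1)}, {(0, -1), (1, 1), (1, -1)}} else {{(0, 1), (0, -1)}, {(0, 1), (1, 1)}, {(0, -1), (1, 1)}}) else (if j = 0 then {{(0, 1), (1, 1)}, {(0, 1), (1, -1)}, {(1, 1), (1, -1)}} else {{(0, 1), (1, 1)}, {(0, -1), (1, 1)}, {(1, 1), (1, -1)}, {(0, 1), (0, -1), (1, -1)}})) else (if i = 0 then (if j = 0 then {{(0, 1), (0, -1)}, {(0, -1), (1, 1)}, {(0, -1), (1, -1)}, {(0, 1), (1, 1), (1, -1)}} else {{(0, 1), (0, -1)}, {(0, 1), (1, -1)}, {(0, -1), (1, -1)}}) else (if j = 0 then {{(0, -1), (1, 1)}, {(0, -1), (1, -1)}, {(1, 1), (1, -1)}} else {{(0, 1), (1, -1)}, {(0, -1), (1, -1)}, {(1, 1), (1, -1)}, {(0, 1), (0, -1), (1, 1)}})))"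

lemma cmpl6: "\<forall>y\<in>Y6. cmpl X6 (gens6 y)"
  unfolding Y6_def X6_def cmpl_def by (simp add: Pow_insert ex_disj_distrib)

lemma pwi6: "\<forall>y\<in>Y6. pwi (gens6 y)"
  unfolding Y6_def pwi_def by simp

lemma sub6: "\<forall>y\<in>Y6. gens6 y \<subseteq> Pow X6"
  unfolding Y6_def X6_def by simp

lemma dist6: "\<forall>y1\<in>Y6. \<forall>y2\<in>Y6. gens6 y1 \<subseteq> up X6 (gens6 y2) \<and> gens6 y2 \<subseteq> up X6 (gens6 y1) \<longrightarrow> y1 = y2"
  unfolding Y6_def X6_def by (simp add: up_mem)

lemma chk6: "\<forall>y1\<in>Y6. \<forall>y2\<in>Y6. prod_op (dou_op (dou_op min (prod_op min min)) min) (*) y1 y2 \<in> Y6 \<and>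
   chk (prod_op min (*)) (gens6 y1) (gens6 y2) (gens6 (prod_op (dou_op (dou_op min (prod_op min min)) min) (*) y1 y2))"
  unfolding Y6_def chk_def by (simp add: prod_op_def)

lemma cls6:
  assumes F: "maximal_linked X6 F"
  shows "\<exists>y\<in>Y6. F = up X6 (gens6 y)"
proof -
  have cm: "\<And>y. y \<in> Y6 \<Longrightarrow> cmpl X6 (gens6 y)" using cmpl6 by blast
  show ?thesis
  proof (cases "{(0, 1)} \<in> F")
    case True
    note ka = True
    have "F = up X6 (gens6 (Inl (Inl 0), 1))"
      by (rule ml_eq[OF F _ cm]) (use ka in \<open>simp_all add: Y6_def\<close>)
    thus ?thesis by (simp add: Y6_def)
  next
    case na: False
    show ?thesis
    proof (cases "{(0, -1)} \<in> F")
      case True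
      note kb = True
      have "F = up X6 (gens6 (Inl (Inl 0), -1))"
        by (rule ml_eq[OF F _ cm]) (use kb in \<open>simp_all add: Y6_def\<close>)
      thus ?thesis by (simp add: Y6_def)
    next
      case nb: False
      show ?thesis
      proof (cases "{(1, 1)} \<in> F")
        case True
        note kc = True
        have "F = up X6 (gens6 (Inr 0, 1))"
          by (rule ml_eq[OF F _ cm]) (use kc in \<open>simp_all add: Y6_def\<close>)
        thus ?thesis by (simp add: Y6_def)
      next
        case nc: False
        show ?thesis
        proof (cases "{(1, -1)} \<in> F")
          case True
          note kd = True
          have "F = up X6 (gens6 (Inr 0, -1))"
            by (rule ml_eq[OF F _ cm]) (use kd in \<open>simp_all add: Y6_def\<close>)
          thus ?thesis by (simp add: Y6_def)
        next
          case nd: False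
          have kbcd: "{(0, -1), (1, 1), (1, -1)} \<in> F" by (rule ml_compl'[OF F _ _ na]) (auto simp: X6_def)
          have kacd: "{(0, 1), (1, 1), (1, -1)} \<in> F" by (rule ml_compl'[OF F _ _ nb]) (auto simp: X6_def)
          have kabd: "{(0, 1), (0, -1), (1, -1)} \<in> F" by (rule ml_compl'[OF F _ _ nc]) (auto simp: X6_def)
          have kabc: "{(0, 1), (0, -1), (1, 1)} \<in> F" by (rule ml_compl'[OF F _ _ nd]) (auto simp: X6_def)
          show ?thesis
          proof (cases "{(0, 1), (0, -1)} \<in> F")
            case True
            note kab = True
            show ?thesis
            proof (cases "{(0, 1), (1, 1)} \<in> F")
              case True
              note kac = True
              show ?thesis
              proof (cases "{(0, 1), (1, -1)} \<in> F")
                case True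
                note kad = True
                have "F = up X6 (gens6 (Inl (Inr (0,0)), 1))"
                  by (rule ml_eq[OF F _ cm]) (use kab kac kad kbcd kacd kabd kabc in \<open>simp_all add: Y6_def\<close>)
                thus ?thesis by (simp add: Y6_def)
              next
                case False
                have kbc: "{(0, -1), (1, 1)} \<in> F" by (rule ml_compl'[OF F _ _ False]) (auto simp: X6_def)
                have "F = up X6 (gens6 (Inl (Inr (0,1)), 1))"
                  by (rule ml_eq[OF F _ cm]) (use kab kac kbc kbcd kacd kabd kabc in \<open>simp_all add: Y6_def\<close>)
                thus ?thesis by (simp add: Y6_def)
              qed
            next
              case False
              have kbd: "{(0, -1), (1, -1)} \<in> F" by (rule ml_compl'[OF F _ _ False]) (auto simp: X6_def)
              show ?thesis
              proof (cases "{(0, 1), (1, -1)} \<in> F")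
                case True
                note kad = True
                have "F = up X6 (gens6 (Inl (Inr (0,1)), -1))"
                  by (rule ml_eq[OF F _ cm]) (use kab kbd kad kbcd kacd kabd kabc in \<open>simp_all add: Y6_def\<close>)
                thus ?thesis by (simp add: Y6_def)
              next
                case False
                have kbc: "{(0, -1), (1, 1)} \<in> F" by (rule ml_compl'[OF F _ _ False]) (auto simp: X6_def)
                have "F = up X6 (gens6 (Inl (Inr (0,0)), -1))"
                  by (rule ml_eq[OF F _ cm]) (use kab kbd kbc kbcd kacd kabd kabc in \<open>simp_all add: Y6_def\<close>)
                thus ?thesis by (simp add: Y6_def)
              qed
            qed
          next
            case False
            have kcd: "{(1, 1), (1, -1)} \<in> F" by (rule ml_compl'[OF F _ _ False]) (auto simp: X6_def)
            show ?thesis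
            proof (cases "{(0, 1), (1, 1)} \<in> F")
              case True
              note kac = True
              show ?thesis
              proof (cases "{(0, 1), (1, -1)} \<in> F")
                case True
                note kad = True
                have "F = up X6 (gens6 (Inl (Inr (1,0)), 1))"
                  by (rule ml_eq[OF F _ cm]) (use kcd kac kad kbcd kacd kabd kabc in \<open>simp_all add: Y6_def\<close>)
                thus ?thesis by (simp add: Y6_def)
              next
                case False
                have kbc: "{(0, -1), (1, 1)} \<in> F" by (rule ml_compl'[OF F _ _ False]) (auto simp: X6_def)
                have "F = up X6 (gens6 (Inl (Inr (1,1)), 1))"
                  by (rule ml_eq[OF F _ cm]) (use kcd kac kbc kbcd kacd kabd kabc in \<open>simp_all add: Y6_def\<close>)
                thus ?thesis by (simp add: Y6_def)
              qed
            next
              case False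
              have kbd: "{(0, -1), (1, -1)} \<in> F" by (rule ml_compl'[OF F _ _ False]) (auto simp: X6_def)
              show ?thesis
              proof (cases "{(0, 1), (1, -1)} \<in> F")
                case True
                note kad = True
                have "F = up X6 (gens6 (Inl (Inr (1,1)), -1))"
                  by (rule ml_eq[OF F _ cm]) (use kcd kbd kad kbcd kacd kabd kabc in \<open>simp_all add: Y6_def\<close>)
                thus ?thesis by (simp add: Y6_def)
              next
                case False
                have kbc: "{(0, -1), (1, 1)} \<in> F" by (rule ml_compl'[OF F _ _ False]) (auto simp: X6_def)
                have "F = up X6 (gens6 (Inl (Inr (1,0)), -1))"
                  by (rule ml_eq[OF F _ cm]) (use kcd kbd kbc kbcd kacd kabd kabc in \<open>simp_all add: Y6_def\<close>)
                thus ?thesis by (simp add: Y6_def)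
              qed
            qed
          qed
        qed
      qed
    qed
  qed
qed

lemma part6: "sg_iso (lam (Lset 2 \<times> Cset 2)) (lam_op (Lset 2 \<times> Cset 2) (prod_op min (*)))
                (dou (dou (Lset 1) (Lset 2 \<times> Lset 2)) (Lset 1) \<times> Cset 2)
                (prod_op (dou_op (dou_op min (prod_op min min)) min) (*))"
  unfolding Y6_eq X6_eq
  by (rule assemble[OF sub6 pwi6 cmpl6 chk6 dist6 cls6])


theorem proposition4p1:
  shows "sg_iso (lam (dou (Lset 1) (Cset 2))) (lam_op (dou (Lset 1) (Cset 2)) (dou_op min (*)))
                (dou (Lset 1) (dou (Lset 1) (Cset 2))) (dou_op min (dou_op min (*))) \<and>
         sg_iso (lam (Lset 2 \<times> Cset 2)) (lam_op (Lset 2 \<times> Cset 2) (prod_op min (*)))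
                (dou (dou (Lset 1) (Lset 2 \<times> Lset 2)) (Lset 1) \<times> Cset 2)
                (prod_op (dou_op (dou_op min (prod_op min min)) min) (*))"
  using part5 part6 by blast

end
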